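(* Let $K$ be a field of characteristic $0$, let $S=K[x_1,\ldots,x_n]$ be graded by $\deg x_i=a_i>0$, and let $I\subsetneq S$ be a graded ideal which is strongly Golod, i.e. $\partial(I)^2\subseteq I$, where $\partial(I)$ is the ideal generated by all $\partial f/\partial x_i$ with $f\in I$, $1\le i\le n$. Let $P$ be a homogeneous prime ideal of $S$ containing $I$. Then $I+P^k$ is strongly Golod (i.e. $\partial(I+P^k)^2\subseteq I+P^k$) for all $k\ge2$. *)

theory Defs
  imports Main "HOL-Library.Poly_Mapping"
begin

(* Polynomial ring S = K[x_v : v in 'v] over a finite variable type 'v,
  realised as finitely supported functions from exponent vectors to coefficients. *)

type_synonym ('v, 'a) mpoly = "('v \<Rightarrow>\<^sub>0 nat) \<Rightarrow>\<^sub>0 'a"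

definition is_ideal :: "'r::comm_ring_1 set \<Rightarrow> bool" where
  "is_ideal I \<longleftrightarrow> 0 \<in> I \<and> (\<forall>a\<in>I. \<forall>b\<in>I. a + b \<in> I) \<and> (\<forall>r. \<forall>a\<in>I. r * a \<in> I)"

definition ideal_gen :: "'r::comm_ring_1 set \<Rightarrow> 'r set" where
  "ideal_gen G = \<Inter>{J. is_ideal J \<and> G \<subseteq> J}"

definition ideal_sum :: "'r::comm_ring_1 set \<Rightarrow> 'r set \<Rightarrow> 'r set" where
  "ideal_sum I J = {a + b | a b. a \<in> I \<and> b \<in> J}"

definition ideal_pow :: "'r::comm_ring_1 set \<Rightarrow> nat \<Rightarrow> 'r set" where
  "ideal_pow J k = ideal_gen {prod_list xs | xs. length xs = k \<and> set xs \<subseteq> J}"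

definition prime_ideal :: "'r::comm_ring_1 set \<Rightarrow> bool" where
  "prime_ideal P \<longleftrightarrow> is_ideal P \<and> P \<noteq> UNIV \<and> (\<forall>a b. a * b \<in> P \<longrightarrow> a \<in> P \<or> b \<in> P)"

definition wdeg :: "('v::finite \<Rightarrow> nat) \<Rightarrow> ('v \<Rightarrow>\<^sub>0 nat) \<Rightarrow> nat" where
  "wdeg w m = (\<Sum>v\<in>UNIV. w v * Poly_Mapping.lookup m v)"

definition hcomp :: "('v::finite \<Rightarrow> nat) \<Rightarrow> nat \<Rightarrow> ('v, 'a::zero) mpoly \<Rightarrow> ('v, 'a) mpoly" where
  "hcomp w d f = Abs_poly_mapping (\<lambda>m. if wdeg w m = d then Poly_Mapping.lookup f m else 0)"

definition graded_ideal :: "('v::finite \<Rightarrow> nat) \<Rightarrow> ('v, 'a::comm_ring_1) mpoly set \<Rightarrow> bool" where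
  "graded_ideal w I \<longleftrightarrow> is_ideal I \<and> (\<forall>f\<in>I. \<forall>d. hcomp w d f \<in> I)"

definition pderiv_var :: "'v \<Rightarrow> ('v, 'a::comm_ring_1) mpoly \<Rightarrow> ('v, 'a) mpoly" where
  "pderiv_var v f = (\<Sum>m\<in>Poly_Mapping.keys f.
     Poly_Mapping.single (m - Poly_Mapping.single v 1) (of_nat (Poly_Mapping.lookup m v) * Poly_Mapping.lookup f m))"

definition deriv_ideal :: "('v, 'a::comm_ring_1) mpoly set \<Rightarrow> ('v, 'a) mpoly set" where
  "deriv_ideal I = ideal_gen {pderiv_var v f | v f. f \<in> I}"

definition strongly_Golod :: "('v, 'a::comm_ring_1) mpoly set \<Rightarrow> bool" where
  "strongly_Golod I \<longleftrightarrow> ideal_pow (deriv_ideal I) 2 \<subseteq> I"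

end

theory Submission
  imports Defs
begin


lemma pm_sum_rep: "(f::'k \<Rightarrow>\<^sub>0 'b::comm_monoid_add) = (\<Sum>m\<in>Poly_Mapping.keys f. Poly_Mapping.single m (Poly_Mapping.lookup f m))"
  by (rule poly_mapping_eqI) (simp add: lookup_sum lookup_single when_def in_keys_iff)

lemma pm_induct[case_names zero single add]:
  fixes f :: "'k \<Rightarrow>\<^sub>0 'b::comm_monoid_add"
  assumes "Q 0" "\<And>m c. Q (Poly_Mapping.single m c)" "\<And>f g. Q f \<Longrightarrow> Q g \<Longrightarrow> Q (f + g)"
  shows "Q f"
proof -
  have "Q (\<Sum>m\<in>A. Poly_Mapping.single m (c m))" if "finite A" for A and c :: "'k \<Rightarrow> 'b"
    using that by (induction A rule: finite_induct) (auto intro: assms)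
  then show ?thesis by (subst pm_sum_rep) simp
qed

abbreviation "e v \<equiv> Poly_Mapping.single v (1::nat)"

definition Fd :: "'v \<Rightarrow> ('v, 'a::comm_ring_1) mpoly \<Rightarrow> ('v \<Rightarrow>\<^sub>0 nat) \<Rightarrow> ('v, 'a) mpoly" where
  "Fd v h m = Poly_Mapping.single (m - e v) (of_nat (Poly_Mapping.lookup m v) * Poly_Mapping.lookup h m)"

lemma pderiv_var_sup:
  assumes "finite A" "Poly_Mapping.keys h \<subseteq> A"
  shows "pderiv_var v h = (\<Sum>m\<in>A. Fd v h m)"
  unfolding pderiv_var_def Fd_def
  by (rule sum.mono_neutral_left) (use assms in \<open>auto simp: in_keys_iff\<close>)

lemma pderiv_add: "pderiv_var v (f + g) = pderiv_var v f + pderiv_var v g"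
proof -
  let ?A = "Poly_Mapping.keys f \<union> Poly_Mapping.keys g"
  have "pderiv_var v (f + g) = (\<Sum>m\<in>?A. Fd v (f+g) m)"
    by (rule pderiv_var_sup) (use keys_add[of f g] in auto)
  also have "\<dots> = (\<Sum>m\<in>?A. Fd v f m) + (\<Sum>m\<in>?A. Fd v g m)"
    by (simp add: Fd_def lookup_add distrib_left single_add sum.distrib)
  also have "\<dots> = pderiv_var v f + pderiv_var v g"
    by (simp add: pderiv_var_sup[of ?A f v] pderiv_var_sup[of ?A g v])
  finally show ?thesis .
qed

lemma pderiv_zero[simp]: "pderiv_var v 0 = 0"
  by (simp add: pderiv_var_def)

lemma pderiv_single: "pderiv_var v (Poly_Mapping.single m c) = Poly_Mapping.single (m - e v) (of_nat (Poly_Mapping.lookup m v) * c)"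
  by (cases "c = 0") (simp_all add: pderiv_var_def)

lemma monom_shift:
  assumes "Poly_Mapping.lookup m v \<noteq> 0"
  shows "m - e v + n = m + n - e v"
  using assms by (intro poly_mapping_eqI) (auto simp: lookup_add lookup_minus lookup_single when_def)

lemma pderiv_mult_single:
  "pderiv_var v (Poly_Mapping.single m c * Poly_Mapping.single n d)
   = pderiv_var v (Poly_Mapping.single m c) * Poly_Mapping.single n d
     + Poly_Mapping.single m c * pderiv_var v (Poly_Mapping.single n d)"
proof -
  have 1: "Poly_Mapping.single (m - e v + n) (of_nat (Poly_Mapping.lookup m v) * c * d)
     = Poly_Mapping.single (m + n - e v) (of_nat (Poly_Mapping.lookup m v) * c * d)"
  proof (cases "Poly_Mapping.lookup m v = 0")
    case False
    then have "m - e v + n = m + n - e v" by (rule monom_shift)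
    then show ?thesis by simp
  qed simp
  have 2: "Poly_Mapping.single (m + (n - e v)) (c * (of_nat (Poly_Mapping.lookup n v) * d))
     = Poly_Mapping.single (m + n - e v) (of_nat (Poly_Mapping.lookup n v) * c * d)"
  proof (cases "Poly_Mapping.lookup n v = 0")
    case False
    then have "n - e v + m = n + m - e v" by (rule monom_shift)
    then have "m + (n - e v) = m + n - e v" by (simp add: add.commute)
    then show ?thesis by (simp add: mult_ac)
  qed simp
  have "pderiv_var v (Poly_Mapping.single m c) * Poly_Mapping.single n d
     = Poly_Mapping.single (m - e v + n) (of_nat (Poly_Mapping.lookup m v) * c * d)"
    by (simp add: pderiv_single mult_single)
  moreover have "Poly_Mapping.single m c * pderiv_var v (Poly_Mapping.single n d)
     = Poly_Mapping.single (m + (n - e v)) (c * (of_nat (Poly_Mapping.lookup n v) * d))"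
    by (simp add: pderiv_single mult_single)
  moreover have "pderiv_var v (Poly_Mapping.single m c * Poly_Mapping.single n d)
     = Poly_Mapping.single (m + n - e v) (of_nat (Poly_Mapping.lookup m v) * c * d)
       + Poly_Mapping.single (m + n - e v) (of_nat (Poly_Mapping.lookup n v) * c * d)"
    by (simp add: pderiv_single mult_single lookup_add distrib_right single_add[symmetric] mult.assoc)
  ultimately show ?thesis by (simp only: 1 2)
qed

lemma pderiv_mult: "pderiv_var v (f * g) = pderiv_var v f * g + f * pderiv_var v (g::('v,'a::comm_ring_1) mpoly)"
proof (induction f rule: pm_induct)
  case zero then show ?case by simp
next
  case (single m c)
  show ?case
  proof (induction g rule: pm_induct)
    case zero then show ?case by simp
  next
    case (single n d) then show ?case by (rule pderiv_mult_single)
  next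
    case (add g1 g2) then show ?case by (simp add: distrib_left pderiv_add algebra_simps)
  qed
next
  case (add f1 f2) then show ?case by (simp add: distrib_right pderiv_add algebra_simps)
qed



lemma ideal_gen_least: "is_ideal J \<Longrightarrow> G \<subseteq> J \<Longrightarrow> ideal_gen G \<subseteq> J"
  unfolding ideal_gen_def by blast

lemma ideal_gen_sub: "G \<subseteq> ideal_gen G"
  unfolding ideal_gen_def by blast

lemma is_ideal_gen: "is_ideal (ideal_gen G)"
  unfolding ideal_gen_def is_ideal_def by (intro conjI ballI allI; simp)

lemma ideal_pow_ideal: "is_ideal (ideal_pow J k)"
  unfolding ideal_pow_def by (rule is_ideal_gen)

lemma ideal_pow_gen: "length xs = k \<Longrightarrow> set xs \<subseteq> J \<Longrightarrow> prod_list xs \<in> ideal_pow J k"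
  unfolding ideal_pow_def by (rule subsetD[OF ideal_gen_sub]) blast

lemma ideal_mult_left: "is_ideal I \<Longrightarrow> a \<in> I \<Longrightarrow> r * a \<in> I"
  unfolding is_ideal_def by blast
lemma ideal_mult_right: "is_ideal I \<Longrightarrow> a \<in> I \<Longrightarrow> a * r \<in> I"
  using ideal_mult_left[of I a r] by (simp add: mult.commute)
lemma ideal_add: "is_ideal I \<Longrightarrow> a \<in> I \<Longrightarrow> b \<in> I \<Longrightarrow> a + b \<in> I"
  unfolding is_ideal_def by blast
lemma ideal_zero: "is_ideal I \<Longrightarrow> 0 \<in> I"
  unfolding is_ideal_def by blast

lemma is_ideal_preim: "is_ideal J \<Longrightarrow> is_ideal {a. a * b \<in> J}"
  unfolding is_ideal_def by (simp add: distrib_right mult.assoc)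

lemma ideal_pow_mult:
  assumes "a \<in> ideal_pow J i" "b \<in> ideal_pow J j"
  shows "a * b \<in> ideal_pow J (i + j)"
proof -
  have gen: "prod_list xs * b \<in> ideal_pow J (i + j)" if xs: "length xs = i" "set xs \<subseteq> J" for xs
  proof -
    have "ideal_pow J j \<subseteq> {b. b * prod_list xs \<in> ideal_pow J (i + j)}"
      unfolding ideal_pow_def[of J j]
    proof (rule ideal_gen_least[OF is_ideal_preim[OF ideal_pow_ideal]])
      show "{prod_list xs |xs. length xs = j \<and> set xs \<subseteq> J} \<subseteq> {b. b * prod_list xs \<in> ideal_pow J (i + j)}"
      proof
        fix y assume "y \<in> {prod_list xs |xs. length xs = j \<and> set xs \<subseteq> J}"
        then obtain ys where ys: "y = prod_list ys" "length ys = j" "set ys \<subseteq> J" by blast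
        have "prod_list (ys @ xs) \<in> ideal_pow J (i + j)"
          using xs ys by (intro ideal_pow_gen) auto
        then show "y \<in> {b. b * prod_list xs \<in> ideal_pow J (i + j)}" using ys by simp
      qed
    qed
    then have "b * prod_list xs \<in> ideal_pow J (i + j)" using assms(2) by blast
    then show ?thesis by (simp add: mult.commute)
  qed
  have "ideal_pow J i \<subseteq> {a. a * b \<in> ideal_pow J (i + j)}"
    unfolding ideal_pow_def[of J i]
  proof (rule ideal_gen_least[OF is_ideal_preim[OF ideal_pow_ideal]])
    show "{prod_list xs |xs. length xs = i \<and> set xs \<subseteq> J} \<subseteq> {a. a * b \<in> ideal_pow J (i + j)}"
      using gen by blast
  qed
  then show ?thesis using assms(1) by blast
qed

lemma ideal_pow_mono:
  assumes "is_ideal J" "j \<le> i"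
  shows "ideal_pow J i \<subseteq> ideal_pow J j"
  unfolding ideal_pow_def[of J i]
proof (rule ideal_gen_least[OF ideal_pow_ideal], rule subsetI)
  fix y assume "y \<in> {prod_list xs |xs. length xs = i \<and> set xs \<subseteq> J}"
  then obtain xs where xs: "length xs = i" "set xs \<subseteq> J" and y: "y = prod_list xs" by blast
  have "prod_list (take j xs) \<in> ideal_pow J j"
    using xs assms(2) by (intro ideal_pow_gen) (auto dest: in_set_takeD)
  then have "prod_list (take j xs) * prod_list (drop j xs) \<in> ideal_pow J j"
    by (rule ideal_mult_right[OF ideal_pow_ideal])
  then show "y \<in> ideal_pow J j"
    by (metis y append_take_drop_id prod_list.append)
qed

lemma ideal_pow_one: "J \<subseteq> ideal_pow J 1"
proof
  fix x assume "x \<in> J"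
  then have "prod_list [x] \<in> ideal_pow J 1" by (intro ideal_pow_gen) auto
  then show "x \<in> ideal_pow J 1" by simp
qed

lemma ideal_pow_one': "is_ideal J \<Longrightarrow> ideal_pow J 1 \<subseteq> J"
  unfolding ideal_pow_def
  by (rule ideal_gen_least) (auto simp: length_Suc_conv)

lemma pderiv_one: "pderiv_var v 1 = 0"
proof -
  have "pderiv_var v (Poly_Mapping.single 0 1) = 0" by (simp only: pderiv_single) simp
  then show ?thesis by (simp only: single_one)
qed

lemma pderiv_prod_list:
  assumes "set xs \<subseteq> P" "length xs = Suc j"
  shows "pderiv_var v (prod_list xs) \<in> ideal_pow P j"
  using assms
proof (induction xs arbitrary: j)
  case Nil then show ?case by simp
next
  case (Cons x ys)
  have ys: "set ys \<subseteq> P" "length ys = j" using Cons.prems by auto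
  have "pderiv_var v x * prod_list ys \<in> ideal_pow P j"
    by (rule ideal_mult_left[OF ideal_pow_ideal], rule ideal_pow_gen[OF ys(2,1)])
  moreover have "x * pderiv_var v (prod_list ys) \<in> ideal_pow P j"
  proof (cases j)
    case 0
    then have "ys = []" using ys by simp
    then show ?thesis by (simp add: pderiv_one ideal_zero[OF ideal_pow_ideal])
  next
    case (Suc j')
    have "pderiv_var v (prod_list ys) \<in> ideal_pow P j'" using Cons.IH ys Suc by blast
    moreover have "x \<in> ideal_pow P 1" using Cons.prems ideal_pow_one by auto
    ultimately show ?thesis using ideal_pow_mult[of x P 1 _ j'] Suc by simp
  qed
  ultimately show ?case
    by (simp add: pderiv_mult ideal_add[OF ideal_pow_ideal])
qed

lemma pderiv_pow:
  assumes "is_ideal P" "k \<ge> 1" "f \<in> ideal_pow P k"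
  shows "pderiv_var v f \<in> ideal_pow P (k - 1)"
proof -
  have sub: "ideal_pow P k \<subseteq> ideal_pow P (k - 1)" by (rule ideal_pow_mono[OF assms(1)]) simp
  let ?S = "{f \<in> ideal_pow P k. pderiv_var v f \<in> ideal_pow P (k - 1)}"
  have IK: "is_ideal (ideal_pow P k)" and IK1: "is_ideal (ideal_pow P (k - 1))" by (rule ideal_pow_ideal)+
  have IS: "is_ideal ?S"
    unfolding is_ideal_def
  proof (intro conjI ballI allI)
    show "0 \<in> ?S" using ideal_zero[OF IK] ideal_zero[OF IK1] by simp
  next
    fix a b assume "a \<in> ?S" "b \<in> ?S"
    then show "a + b \<in> ?S" using ideal_add[OF IK] ideal_add[OF IK1] by (simp add: pderiv_add)
  next
    fix r a assume a: "a \<in> ?S"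
    then have "a \<in> ideal_pow P (k - 1)" using sub by blast
    then have "pderiv_var v r * a + r * pderiv_var v a \<in> ideal_pow P (k - 1)"
      using a by (intro ideal_add[OF IK1] ideal_mult_left[OF IK1]) auto
    then show "r * a \<in> ?S" using a ideal_mult_left[OF IK] by (simp add: pderiv_mult)
  qed
  have GEN: "{prod_list xs |xs. length xs = k \<and> set xs \<subseteq> P} \<subseteq> ?S"
  proof (rule subsetI)
    fix y assume "y \<in> {prod_list xs |xs. length xs = k \<and> set xs \<subseteq> P}"
    then obtain xs where xs: "length xs = k" "set xs \<subseteq> P" and y: "y = prod_list xs" by blast
    have "prod_list xs \<in> ideal_pow P k" using xs by (rule ideal_pow_gen)
    moreover have "length xs = Suc (k - 1)" using xs assms(2) by simp
    then have "pderiv_var v (prod_list xs) \<in> ideal_pow P (k - 1)"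
      using xs(2) by (rule pderiv_prod_list[rotated])
    ultimately show "y \<in> ?S" using y by simp
  qed
  have "ideal_pow P k \<subseteq> ?S"
    using ideal_gen_least[OF IS GEN] by (simp only: ideal_pow_def[of P k, symmetric])
  then show ?thesis using assms(3) by blast
qed



lemma ideal_sum_ideal:
  assumes "is_ideal I" "is_ideal J" shows "is_ideal (ideal_sum I J)"
  unfolding is_ideal_def
proof (intro conjI ballI allI)
  have "0 + 0 \<in> ideal_sum I J" unfolding ideal_sum_def
    using ideal_zero[OF assms(1)] ideal_zero[OF assms(2)] by blast
  then show "0 \<in> ideal_sum I J" by simp
next
  fix x y assume "x \<in> ideal_sum I J" "y \<in> ideal_sum I J"
  then obtain a b c d where "x = a + b" "y = c + d" "a \<in> I" "b \<in> J" "c \<in> I" "d \<in> J"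
    unfolding ideal_sum_def by blast
  then show "x + y \<in> ideal_sum I J" unfolding ideal_sum_def
    using ideal_add[OF assms(1), of a c] ideal_add[OF assms(2), of b d]
    by (intro CollectI exI[of _ "a + c"] exI[of _ "b + d"]) (simp add: algebra_simps)
next
  fix r x assume "x \<in> ideal_sum I J"
  then obtain a b where "x = a + b" "a \<in> I" "b \<in> J"
    unfolding ideal_sum_def by blast
  then show "r * x \<in> ideal_sum I J" unfolding ideal_sum_def
    using ideal_mult_left[OF assms(1), of a r] ideal_mult_left[OF assms(2), of b r]
    by (intro CollectI exI[of _ "r * a"] exI[of _ "r * b"]) (simp add: algebra_simps)
qed

lemma sq_in_pow2: "a \<in> J \<Longrightarrow> b \<in> J \<Longrightarrow> a * b \<in> ideal_pow J 2"
  using ideal_pow_gen[of "[a, b]" 2 J] by simp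

lemma deriv_sub_prime:
  fixes I P :: "('v, 'a::comm_ring_1) mpoly set"
  assumes "strongly_Golod I" "prime_ideal P" "I \<subseteq> P"
  shows "deriv_ideal I \<subseteq> P"
  unfolding deriv_ideal_def
proof (rule ideal_gen_least)
  show "is_ideal P" using assms(2) unfolding prime_ideal_def by blast
  show "{pderiv_var v f |v f. f \<in> I} \<subseteq> P"
  proof
    fix g assume "g \<in> {pderiv_var v f |v f. f \<in> I}"
    moreover have "{pderiv_var v f |v f. f \<in> I} \<subseteq> deriv_ideal I"
      unfolding deriv_ideal_def by (rule ideal_gen_sub)
    ultimately have "g \<in> deriv_ideal I" by (rule rev_subsetD)
    then have "g * g \<in> ideal_pow (deriv_ideal I) 2" using sq_in_pow2 by blast
    then have "g * g \<in> P" using assms(1,3) unfolding strongly_Golod_def by blast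
    then show "g \<in> P" using assms(2) unfolding prime_ideal_def by blast
  qed
qed

theorem corollary2p2:
  fixes w :: "'v::finite \<Rightarrow> nat"
    and I P :: "('v, 'a::field_char_0) mpoly set"
    and k :: nat
  assumes "\<forall>v. w v > 0"
    and "graded_ideal w I" and "I \<noteq> UNIV"
    and "strongly_Golod I"
    and "prime_ideal P" and "graded_ideal w P" and "I \<subseteq> P"
    and "k \<ge> 2"
  shows "strongly_Golod (ideal_sum I (ideal_pow P k))"
proof -
  have II: "is_ideal I" using assms(2) unfolding graded_ideal_def by blast
  have IP: "is_ideal P" using assms(5) unfolding prime_ideal_def by blast
  define T where "T = ideal_sum I (ideal_pow P k)"
  define Q where "Q = ideal_sum (deriv_ideal I) (ideal_pow P (k - 1))"
  have IT: "is_ideal T" unfolding T_def by (rule ideal_sum_ideal[OF II ideal_pow_ideal])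
  have IQ: "is_ideal Q" unfolding Q_def deriv_ideal_def
    by (rule ideal_sum_ideal[OF is_ideal_gen ideal_pow_ideal])
  have dsub: "deriv_ideal I \<subseteq> P" by (rule deriv_sub_prime[OF assms(4,5,7)])
  have DQ: "deriv_ideal T \<subseteq> Q"
    unfolding deriv_ideal_def[of T]
  proof (rule ideal_gen_least[OF IQ], rule subsetI)
    fix y assume "y \<in> {pderiv_var v f |v f. f \<in> T}"
    then obtain v f where y: "y = pderiv_var v f" and f: "f \<in> T" by blast
    then obtain a b where ab: "f = a + b" "a \<in> I" "b \<in> ideal_pow P k"
      unfolding T_def ideal_sum_def by blast
    have "pderiv_var v a \<in> deriv_ideal I"
      unfolding deriv_ideal_def using ab(2) by (intro subsetD[OF ideal_gen_sub]) blast
    moreover have "pderiv_var v b \<in> ideal_pow P (k - 1)"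
      using pderiv_pow[OF IP _ ab(3)] assms(8) by simp
    ultimately show "y \<in> Q" unfolding Q_def ideal_sum_def y ab(1) pderiv_add by blast
  qed
  have prod: "x * y \<in> T" if xQ: "x \<in> Q" and yQ: "y \<in> Q" for x y
  proof -
    obtain a1 a2 where a: "x = a1 + a2" "a1 \<in> deriv_ideal I" "a2 \<in> ideal_pow P (k - 1)"
      using xQ unfolding Q_def ideal_sum_def by blast
    obtain b1 b2 where b: "y = b1 + b2" "b1 \<in> deriv_ideal I" "b2 \<in> ideal_pow P (k - 1)"
      using yQ unfolding Q_def ideal_sum_def by blast
    have kk: "1 + (k - 1) = k" using assms(8) by simp
    have 1: "a1 * b1 \<in> I" using sq_in_pow2[OF a(2) b(2)] assms(4) unfolding strongly_Golod_def by blast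
    have a1P: "a1 \<in> ideal_pow P 1" using a(2) dsub ideal_pow_one by blast
    have b1P: "b1 \<in> ideal_pow P 1" using b(2) dsub ideal_pow_one by blast
    have 2: "a1 * b2 \<in> ideal_pow P k" using ideal_pow_mult[OF a1P b(3)] kk by simp
    have 3: "a2 * b1 \<in> ideal_pow P k" using ideal_pow_mult[OF b1P a(3)] kk by (simp add: mult.commute)
    have 4: "a2 * b2 \<in> ideal_pow P k"
    proof -
      have "k \<le> (k - 1) + (k - 1)" using assms(8) by simp
      then have "ideal_pow P ((k - 1) + (k - 1)) \<subseteq> ideal_pow P k" by (rule ideal_pow_mono[OF IP])
      then show ?thesis using ideal_pow_mult[OF a(3) b(3)] by blast
    qed
    have "a1 * b2 + a2 * b1 + a2 * b2 \<in> ideal_pow P k"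
      using 2 3 4 by (intro ideal_add[OF ideal_pow_ideal])
    moreover have "x * y = a1 * b1 + (a1 * b2 + a2 * b1 + a2 * b2)"
      using a(1) b(1) by (simp add: algebra_simps)
    ultimately show ?thesis using 1 unfolding T_def ideal_sum_def by blast
  qed
  have "ideal_pow (deriv_ideal T) 2 \<subseteq> T"
    unfolding ideal_pow_def[of "deriv_ideal T" 2]
  proof (rule ideal_gen_least[OF IT], rule subsetI)
    fix z assume "z \<in> {prod_list xs |xs. length xs = 2 \<and> set xs \<subseteq> deriv_ideal T}"
    then obtain xs where xs: "z = prod_list xs" "length xs = 2" "set xs \<subseteq> deriv_ideal T" by blast
    then obtain x y where "xs = [x, y]" by (metis (no_types) length_0_conv length_Suc_conv numeral_2_eq_2)
    then show "z \<in> T" using xs prod DQ by auto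
  qed
  then show ?thesis unfolding strongly_Golod_def T_def .
qed

end
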